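(* Let $D$ be a transportability diagram and let $G$ be the subgraph obtained by removing all transportability nodes $T$ from $D$. Let $X,Y,Z$ be disjoint sets of vertices of $D$ containing no transportability nodes. Then $X$ and $Y$ are d-separated by $Z\cup T'$ in $D$ for every $T'\subseteq T$ if and only if $X$ and $Y$ are d-separated by $Z$ in $G$.
   Context: A (semi-Markovian) graph $G=(V,E)$ has directed edges forming an acyclic graph and bidirected edges $V_j\leftrightarrow V_k$. A transportability diagram $D$ is such a graph $G$ together with a set $T$ of additional vertices (transportability nodes), each having exactly one incident edge, a directed edge $T_j\to V_j$ with $V_j\in V$. d-separation: a path is blocked by a set $Z$ if it contains a non-collider $M\in Z$ (patterns $I\to M\to J$, $I\leftrightarrow M\to J$, $I\leftarrow M\to J$ and their reversals) or a collider $M$ (patterns $I\to M\leftarrow J$, $I\leftrightarrow M\leftarrow J$, $I\leftrightarrow M\leftrightarrow J$) with $\mathrm{De}(M)\cap Z=\emptyset$, where $\mathrm{De}(M)$ is $M$ together with its descendants; disjoint $X,Y$ are d-separated by $Z$ if every path between $X$ and $Y$ is blocked by $Z$. *)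

theory Defs
  imports Main
begin

text \<open>A graph is given by a vertex set W, a set Ed of directed edges (a,b) meaning a \<rightarrow> b,
  and a set Eb of bidirected edges; (a,b) \<in> Eb or (b,a) \<in> Eb means a \<leftrightarrow> b.\<close>

definition semi_markovian :: "'v set \<Rightarrow> ('v \<times> 'v) set \<Rightarrow> ('v \<times> 'v) set \<Rightarrow> bool" where
  "semi_markovian W Ed Eb \<longleftrightarrow> finite W \<and> Ed \<subseteq> W \<times> W \<and> Eb \<subseteq> W \<times> W
     \<and> acyclic Ed \<and> (\<forall>a. (a,a) \<notin> Eb)"

text \<open>A transportability diagram: the graph G on V (with directed edges Ed \<inter> V\<times>V and
  bidirected edges Eb) plus the transportability nodes T, each having exactly one incident edge,
  a directed edge t \<rightarrow> v with v \<in> V.\<close>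

definition transport_diagram ::
  "'v set \<Rightarrow> 'v set \<Rightarrow> ('v \<times> 'v) set \<Rightarrow> ('v \<times> 'v) set \<Rightarrow> bool" where
  "transport_diagram V T Ed Eb \<longleftrightarrow> V \<inter> T = {} \<and> semi_markovian (V \<union> T) Ed Eb
     \<and> (\<forall>t\<in>T. \<exists>v\<in>V. {e\<in>Ed. fst e = t \<or> snd e = t} = {(t,v)}
                      \<and> (\<forall>e\<in>Eb. fst e \<noteq> t \<and> snd e \<noteq> t))"

datatype ekind = Fwd | Bwd | Bi

fun has_edge :: "('v \<times> 'v) set \<Rightarrow> ('v \<times> 'v) set \<Rightarrow> 'v \<Rightarrow> ekind \<Rightarrow> 'v \<Rightarrow> bool" where
  "has_edge Ed Eb a Fwd b \<longleftrightarrow> (a,b) \<in> Ed"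
| "has_edge Ed Eb a Bwd b \<longleftrightarrow> (b,a) \<in> Ed"
| "has_edge Ed Eb a Bi b \<longleftrightarrow> (a,b) \<in> Eb \<or> (b,a) \<in> Eb"

definition is_path :: "'v set \<Rightarrow> ('v \<times> 'v) set \<Rightarrow> ('v \<times> 'v) set \<Rightarrow> 'v list \<Rightarrow> ekind list \<Rightarrow> bool" where
  "is_path W Ed Eb vs es \<longleftrightarrow> vs \<noteq> [] \<and> length vs = Suc (length es) \<and> distinct vs
     \<and> set vs \<subseteq> W \<and> (\<forall>i < length es. has_edge Ed Eb (vs!i) (es!i) (vs!Suc i))"

text \<open>An interior vertex is a collider iff both incident path edges have an arrowhead at it.\<close>
definition collider :: "ekind \<Rightarrow> ekind \<Rightarrow> bool" where
  "collider e1 e2 \<longleftrightarrow> e1 \<in> {Fwd, Bi} \<and> e2 \<in> {Bwd, Bi}"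

definition De :: "('v \<times> 'v) set \<Rightarrow> 'v \<Rightarrow> 'v set" where
  "De Ed m = Ed\<^sup>* `` {m}"

definition blocked :: "('v \<times> 'v) set \<Rightarrow> 'v set \<Rightarrow> 'v list \<Rightarrow> ekind list \<Rightarrow> bool" where
  "blocked Ed Z vs es \<longleftrightarrow> (\<exists>i. 0 < i \<and> i < length es \<and>
      ((\<not> collider (es!(i-1)) (es!i) \<and> vs!i \<in> Z)
       \<or> (collider (es!(i-1)) (es!i) \<and> De Ed (vs!i) \<inter> Z = {})))"

definition d_separated ::
  "'v set \<Rightarrow> ('v \<times> 'v) set \<Rightarrow> ('v \<times> 'v) set \<Rightarrow> 'v set \<Rightarrow> 'v set \<Rightarrow> 'v set \<Rightarrow> bool" where
  "d_separated W Ed Eb X Y Z \<longleftrightarrow> (\<forall>vs es. is_path W Ed Eb vs es \<and> hd vs \<in> X \<and> last vs \<in> Y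
       \<longrightarrow> blocked Ed Z vs es)"

end

theory Submission
  imports Defs
begin

lemma td_T:
  assumes "transport_diagram V T Ed Eb" "t \<in> T"
  obtains v where "v \<in> V" "\<And>e. e \<in> Ed \<Longrightarrow> fst e = t \<or> snd e = t \<Longrightarrow> e = (t,v)"
    "\<And>e. e \<in> Eb \<Longrightarrow> fst e \<noteq> t \<and> snd e \<noteq> t"
proof -
  have "\<forall>t\<in>T. \<exists>v\<in>V. {e\<in>Ed. fst e = t \<or> snd e = t} = {(t,v)}
                      \<and> (\<forall>e\<in>Eb. fst e \<noteq> t \<and> snd e \<noteq> t)"
    using assms(1) unfolding transport_diagram_def by (elim conjE)
  then have "\<exists>v\<in>V. {e\<in>Ed. fst e = t \<or> snd e = t} = {(t,v)}
                      \<and> (\<forall>e\<in>Eb. fst e \<noteq> t \<and> snd e \<noteq> t)"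
    using assms(2) by (rule bspec)
  then obtain v where v: "v \<in> V" "{e\<in>Ed. fst e = t \<or> snd e = t} = {(t,v)}"
    "\<forall>e\<in>Eb. fst e \<noteq> t \<and> snd e \<noteq> t" by (elim bexE conjE)
  have "e = (t,v)" if "e \<in> Ed" "fst e = t \<or> snd e = t" for e
  proof -
    have "e \<in> {e\<in>Ed. fst e = t \<or> snd e = t}" using that by (rule CollectI[of _ e, OF conjI])
    then have "e \<in> {(t,v)}" by (simp only: v(2))
    then show ?thesis by simp
  qed
  then show ?thesis using that v by blast
qed

lemma De_eq:
  assumes "transport_diagram V T Ed Eb" and "m \<in> V"
  shows "De Ed m = De (Ed \<inter> (V \<times> V)) m \<and> De Ed m \<subseteq> V"
proof -
  have stepV: "y \<in> V" if "(x,y) \<in> Ed" "x \<in> V" for x y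
  proof (rule ccontr)
    assume "y \<notin> V"
    have "Ed \<subseteq> (V \<union> T) \<times> (V \<union> T)" using assms(1)
      unfolding transport_diagram_def semi_markovian_def by blast
    with that \<open>y \<notin> V\<close> have "y \<in> T" by blast
    then obtain v where "\<And>e. e \<in> Ed \<Longrightarrow> fst e = y \<or> snd e = y \<Longrightarrow> e = (y,v)"
      using td_T[OF assms(1)] by metis
    then have "(x,y) = (y,v)" using that(1) by simp
    with that \<open>y \<notin> V\<close> show False by simp
  qed
  have main: "x \<in> V \<and> (m,x) \<in> (Ed \<inter> (V \<times> V))\<^sup>*" if "(m,x) \<in> Ed\<^sup>*" for x
    using that
  proof (induction rule: rtrancl_induct)
    case base then show ?case using assms(2) by simp
  next
    case (step y z)
    then have "z \<in> V" using stepV by blast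
    with step show ?case by (meson IntI SigmaI rtrancl.rtrancl_into_rtrancl)
  qed
  have sub: "(Ed \<inter> (V \<times> V))\<^sup>* \<subseteq> Ed\<^sup>*" by (simp add: rtrancl_mono)
  show ?thesis unfolding De_def using main sub by blast
qed

lemma path_in_V:
  assumes "transport_diagram V T Ed Eb" and "is_path (V \<union> T) Ed Eb vs es"
    and "hd vs \<in> V" and "last vs \<in> V"
  shows "set vs \<subseteq> V"
proof
  fix x assume "x \<in> set vs"
  then obtain i where i: "i < length vs" "vs!i = x" by (meson in_set_conv_nth)
  have P: "vs \<noteq> []" "length vs = Suc (length es)" "distinct vs" "set vs \<subseteq> V \<union> T"
    "\<forall>i < length es. has_edge Ed Eb (vs!i) (es!i) (vs!Suc i)"
    using assms(2) unfolding is_path_def by auto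
  show "x \<in> V"
  proof (rule ccontr)
    assume "x \<notin> V"
    with i P have "x \<in> T" by (meson UnE nth_mem subsetD)
    have VT: "V \<inter> T = {}" using assms(1) unfolding transport_diagram_def by blast
    have "i \<noteq> 0"
    proof
      assume "i = 0"
      then have "x = hd vs" using i P(1) by (simp add: hd_conv_nth)
      then show False using assms(3) \<open>x \<notin> V\<close> by simp
    qed
    moreover have "i \<noteq> length es"
    proof
      assume "i = length es"
      then have "x = last vs" using i P(1,2) by (simp add: last_conv_nth)
      then show False using assms(4) \<open>x \<notin> V\<close> by simp
    qed
    ultimately have ii: "0 < i" "i < length es" using i P by auto
    obtain v where mem: "\<And>e. e \<in> Ed \<Longrightarrow> fst e = x \<or> snd e = x \<Longrightarrow> e = (x,v)"
      and v2: "\<And>e. e \<in> Eb \<Longrightarrow> fst e \<noteq> x \<and> snd e \<noteq> x"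
      using td_T[OF assms(1) \<open>x \<in> T\<close>] by metis
    have A: "a = v" if "has_edge Ed Eb a k x" for a k
    proof (cases k)
      case Fwd then show ?thesis using that mem[of "(a,x)"] by auto
    next
      case Bwd then show ?thesis using that mem[of "(x,a)"] by auto
    next
      case Bi then show ?thesis using that v2 by fastforce
    qed
    have B: "a = v" if "has_edge Ed Eb x k a" for a k
    proof (cases k)
      case Fwd then show ?thesis using that mem[of "(x,a)"] by auto
    next
      case Bwd then show ?thesis using that mem[of "(a,x)"] by auto
    next
      case Bi then show ?thesis using that v2 by fastforce
    qed
    have "i - 1 < length es" "Suc (i - 1) = i" using ii by auto
    then have "has_edge Ed Eb (vs!(i-1)) (es!(i-1)) (vs!Suc (i-1))" using P(5) by blast
    then have "has_edge Ed Eb (vs!(i-1)) (es!(i-1)) (vs!i)" using \<open>Suc (i - 1) = i\<close> by simp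
    then have "vs!(i-1) = v" using A i(2) by blast
    moreover have "vs!(Suc i) = v" using B[of "es!i" "vs!Suc i"] P(5) ii i by auto
    ultimately have "vs!(i-1) = vs!(Suc i)" by simp
    moreover have "i - 1 \<noteq> Suc i" by simp
    moreover have "i - 1 < length vs" "Suc i < length vs" using P(2) ii by auto
    ultimately show False using P(3) nth_eq_iff_index_eq by blast
  qed
qed

theorem lemma1:
  assumes "transport_diagram V T Ed Eb"
    and "X \<subseteq> V" and "Y \<subseteq> V" and "Z \<subseteq> V"
    and "X \<inter> Y = {}" and "X \<inter> Z = {}" and "Y \<inter> Z = {}"
  shows "(\<forall>T' \<subseteq> T. d_separated (V \<union> T) Ed Eb X Y (Z \<union> T'))
         \<longleftrightarrow> d_separated V (Ed \<inter> (V \<times> V)) (Eb \<inter> (V \<times> V)) X Y Z"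
proof
  assume H: "\<forall>T' \<subseteq> T. d_separated (V \<union> T) Ed Eb X Y (Z \<union> T')"
  show "d_separated V (Ed \<inter> (V \<times> V)) (Eb \<inter> (V \<times> V)) X Y Z"
    unfolding d_separated_def
  proof (intro allI impI)
    fix vs es assume p: "is_path V (Ed \<inter> (V \<times> V)) (Eb \<inter> (V \<times> V)) vs es \<and> hd vs \<in> X \<and> last vs \<in> Y"
    have hp: "has_edge Ed Eb a k b" if "has_edge (Ed \<inter> (V \<times> V)) (Eb \<inter> (V \<times> V)) a k b" for a k b
      using that by (cases k) auto
    have P: "vs \<noteq> []" "length vs = Suc (length es)" "distinct vs" "set vs \<subseteq> V"
      "\<And>i. i < length es \<Longrightarrow> has_edge (Ed \<inter> (V \<times> V)) (Eb \<inter> (V \<times> V)) (vs!i) (es!i) (vs!Suc i)"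
      using p unfolding is_path_def by auto
    have "\<forall>i < length es. has_edge Ed Eb (vs!i) (es!i) (vs!Suc i)"
      using P(5) hp by blast
    moreover have "set vs \<subseteq> V \<union> T" using P(4) by blast
    ultimately have ip: "is_path (V \<union> T) Ed Eb vs es" unfolding is_path_def
      using P(1,2,3) by (intro conjI)
    have "{} \<subseteq> T" by simp
    then have "d_separated (V \<union> T) Ed Eb X Y (Z \<union> {})" using H by blast
    then have "blocked Ed (Z \<union> {}) vs es" using ip p unfolding d_separated_def by blast
    then obtain i where i: "0 < i" "i < length es"
      "(\<not> collider (es!(i-1)) (es!i) \<and> vs!i \<in> Z)
       \<or> (collider (es!(i-1)) (es!i) \<and> De Ed (vs!i) \<inter> Z = {})"
      unfolding blocked_def Un_empty_right by blast
    have "vs!i \<in> V" using P i by auto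
    then have "De Ed (vs!i) = De (Ed \<inter> (V \<times> V)) (vs!i)" using De_eq[OF assms(1)] by blast
    then have "(\<not> collider (es!(i-1)) (es!i) \<and> vs!i \<in> Z)
       \<or> (collider (es!(i-1)) (es!i) \<and> De (Ed \<inter> (V \<times> V)) (vs!i) \<inter> Z = {})"
      using i(3) by simp
    then show "blocked (Ed \<inter> (V \<times> V)) Z vs es" unfolding blocked_def using i(1,2) by blast
  qed
next
  assume H: "d_separated V (Ed \<inter> (V \<times> V)) (Eb \<inter> (V \<times> V)) X Y Z"
  show "\<forall>T' \<subseteq> T. d_separated (V \<union> T) Ed Eb X Y (Z \<union> T')"
  proof (intro allI impI)
    fix T' assume T': "T' \<subseteq> T"
    have VT: "V \<inter> T = {}" using assms(1) unfolding transport_diagram_def by blast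
    show "d_separated (V \<union> T) Ed Eb X Y (Z \<union> T')" unfolding d_separated_def
    proof (intro allI impI)
      fix vs es assume p: "is_path (V \<union> T) Ed Eb vs es \<and> hd vs \<in> X \<and> last vs \<in> Y"
      have ipD: "is_path (V \<union> T) Ed Eb vs es" using p by blast
      have "hd vs \<in> V" "last vs \<in> V" using p assms(2,3) by blast+
      then have sV: "set vs \<subseteq> V" using path_in_V[OF assms(1) ipD] by blast
      have hp: "has_edge (Ed \<inter> (V \<times> V)) (Eb \<inter> (V \<times> V)) a k b"
        if "has_edge Ed Eb a k b" "a \<in> V" "b \<in> V" for a k b
        using that by (cases k) auto
      have P: "vs \<noteq> []" "length vs = Suc (length es)" "distinct vs"
        "\<And>i. i < length es \<Longrightarrow> has_edge Ed Eb (vs!i) (es!i) (vs!Suc i)"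
        using ipD unfolding is_path_def by auto
      have "\<forall>i < length es. has_edge (Ed \<inter> (V \<times> V)) (Eb \<inter> (V \<times> V)) (vs!i) (es!i) (vs!Suc i)"
      proof (intro allI impI)
        fix i assume "i < length es"
        then have "vs!i \<in> V" "vs!Suc i \<in> V" using sV P(2) by auto
        then show "has_edge (Ed \<inter> (V \<times> V)) (Eb \<inter> (V \<times> V)) (vs ! i) (es ! i) (vs ! Suc i)"
          using hp P(4) \<open>i < length es\<close> by blast
      qed
      then have "is_path V (Ed \<inter> (V \<times> V)) (Eb \<inter> (V \<times> V)) vs es"
        unfolding is_path_def using P(1,2,3) sV by (intro conjI)
      then have "blocked (Ed \<inter> (V \<times> V)) Z vs es" using H p unfolding d_separated_def by blast
      then obtain i where i: "0 < i" "i < length es"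
        "(\<not> collider (es!(i-1)) (es!i) \<and> vs!i \<in> Z)
         \<or> (collider (es!(i-1)) (es!i) \<and> De (Ed \<inter> (V \<times> V)) (vs!i) \<inter> Z = {})"
        unfolding blocked_def by blast
      have "vs!i \<in> V" using P(2) i sV by auto
      then have De1: "De Ed (vs!i) = De (Ed \<inter> (V \<times> V)) (vs!i)" and De2: "De Ed (vs!i) \<subseteq> V"
        using De_eq[OF assms(1)] by blast+
      then have "De Ed (vs!i) \<inter> T' = {}" using VT T' by blast
      then have "(\<not> collider (es!(i-1)) (es!i) \<and> vs!i \<in> Z \<union> T')
         \<or> (collider (es!(i-1)) (es!i) \<and> De Ed (vs!i) \<inter> (Z \<union> T') = {})"
        using i(3) De1 by auto
      then show "blocked Ed (Z \<union> T') vs es" unfolding blocked_def using i(1,2) by blast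
    qed
  qed
qed

end
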